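(* Fix an integer $k\ge 0$, a link $i$ of a multi-link system, and $\#\in\{L,J\}$. Let $\mathfrak{V}_{L_i}^{(k+1)}=(V_0,\dots,V_{k+1})\in\mathbb{R}^{6(k+2)}$ be the comprehensive spatial velocity of link $i$ and $\mathfrak{V}_{L_i}^{(k)}=(V_0,\dots,V_k)$ its truncation, let $\mathfrak{h}_{\#_i}^{(k+1)}=(h_0,\dots,h_{k+1})\in\mathbb{R}^{6(k+2)}$ be the comprehensive (link or joint) momentum and $\mathfrak{h}_{\#_i}^{(k)}=(h_0,\dots,h_k)$ its truncation, and let the comprehensive force be $$\mathfrak{f}_{\#_i}^{(k)}=\mathfrak{U}\big([\mathfrak{V}_{L_i}^{(k)}\times^{*}_{6\cdot k}]\big)\,\mathfrak{h}_{\#_i}^{(k+1)}.$$ Suppose $\mathfrak{V}_{L_i}^{(k+1)}$ and $\mathfrak{h}_{\#_i}^{(k+1)}$ depend differentiably on a scalar parameter $\varepsilon$ and let $\delta$ denote $\frac{d}{d\varepsilon}$ at $\varepsilon=0$. Then $$\delta\mathfrak{f}_{\#_i}^{(k)}=\mathfrak{U}\big([\mathfrak{V}_{L_i}^{(k)}\times^{*}_{6\cdot k}]\big)\,\delta\mathfrak{h}_{\#_i}^{(k+1)}+\begin{bmatrix}[\mathfrak{h}_{\#_i}^{(k)}\,\hat{\times}^{*}_{6\cdot k}] & 0_{6(k+1)\times 6}\end{bmatrix}\delta\mathfrak{V}_{L_i}^{(k+1)}.$$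
   Context: Notation. For $u\in\mathbb{R}^3$, $[u\times]$ is the skew-symmetric cross-product matrix. For $u=(v_0,v_1)\in\mathbb{R}^6$, $[u\times_6]=\begin{bmatrix}[v_0\times]&0\\ [v_1\times]&[v_0\times]\end{bmatrix}$ and $[u\times^{*}_6]:=-[u\times_6]^{T}$. For a stacked vector $u=(u_0,\dots,u_k)\in\mathbb{R}^{6(k+1)}$, $[u\times^{*}_{6\cdot k}]$ is the block lower-triangular Toeplitz matrix with $(l,m)$ block $[u_{l-m}\times^{*}_6]$ for $l\ge m$ and zero blocks above the diagonal; $[x\,\hat{\times}^{*}_{6\cdot k}]$ is the matrix with $[x\,\hat{\times}^{*}_{6\cdot k}]\,y=[y\times^{*}_{6\cdot k}]\,x$ for all $y$. $N_{(1:k+1)}=\mathrm{diag}(1\cdot I_6,2\cdot I_6,\dots,(k+1)\cdot I_6)$. For $M\in\mathbb{R}^{6(k+1)\times 6(k+1)}$, $\mathfrak{U}(M):=\begin{bmatrix}M&0_{6(k+1)\times 6}\end{bmatrix}+\begin{bmatrix}0_{6(k+1)\times 6}&N_{(1:k+1)}\end{bmatrix}\in\mathbb{R}^{6(k+1)\times 6(k+2)}$. Comprehensive quantities are stacked vectors $(a,\tfrac{1}{1!}\dot a,\dots,\tfrac{1}{k!}a^{(k)})$ of a physical quantity and its scaled time derivatives; $\#=L$ refers to link quantities and $\#=J$ to quantities transmitted through the joint from the parent of link $i$ to link $i$, both expressed in the frame of link $i$. *)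

theory Defs
  imports "HOL-Analysis.Analysis"
begin

text \<open>Vectors of R^n are represented as functions nat => real (only indices < n matter),
  matrices as functions nat => nat => real (only indices in range matter).\<close>

type_synonym vec = "nat \<Rightarrow> real"
type_synonym mat = "nat \<Rightarrow> nat \<Rightarrow> real"

definition mat_vec :: "nat \<Rightarrow> nat \<Rightarrow> mat \<Rightarrow> vec \<Rightarrow> vec" where
  "mat_vec r c M x = (\<lambda>a. if a < r then (\<Sum>b<c. M a b * x b) else 0)"

definition vec_add :: "vec \<Rightarrow> vec \<Rightarrow> vec" where
  "vec_add x y = (\<lambda>a. x a + y a)"

definition skew3 :: "vec \<Rightarrow> mat" where
  "skew3 u = (\<lambda>a b.
     if a = 0 \<and> b = 1 then - u 2 else if a = 0 \<and> b = 2 then u 1 else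
     if a = 1 \<and> b = 0 then u 2 else if a = 1 \<and> b = 2 then - u 0 else
     if a = 2 \<and> b = 0 then - u 1 else if a = 2 \<and> b = 1 then u 0 else 0)"

definition cross6 :: "vec \<Rightarrow> mat" where
  "cross6 u = (\<lambda>a b.
     if a < 3 \<and> b < 3 then skew3 u a b
     else if 3 \<le> a \<and> a < 6 \<and> b < 3 then skew3 (\<lambda>j. u (j + 3)) (a - 3) b
     else if 3 \<le> a \<and> a < 6 \<and> 3 \<le> b \<and> b < 6 then skew3 u (a - 3) (b - 3)
     else 0)"

definition cross6_star :: "vec \<Rightarrow> mat" where
  "cross6_star u = (\<lambda>a b. - cross6 u b a)"

definition blk :: "vec \<Rightarrow> nat \<Rightarrow> vec" where
  "blk u j = (\<lambda>r. u (6 * j + r))"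

definition trunc :: "nat \<Rightarrow> vec \<Rightarrow> vec" where
  "trunc k u = (\<lambda>a. if a < 6 * (k + 1) then u a else 0)"

definition cross_star_6k :: "nat \<Rightarrow> vec \<Rightarrow> mat" where
  "cross_star_6k k u = (\<lambda>a b.
     if a < 6 * (k + 1) \<and> b < 6 * (k + 1) \<and> b div 6 \<le> a div 6
     then cross6_star (blk u (a div 6 - b div 6)) (a mod 6) (b mod 6) else 0)"

definition hat_cross_star_6k :: "nat \<Rightarrow> vec \<Rightarrow> mat" where
  "hat_cross_star_6k k x = (THE M.
     (\<forall>a b. (6 * (k + 1) \<le> a \<or> 6 * (k + 1) \<le> b) \<longrightarrow> M a b = 0) \<and>
     (\<forall>y. mat_vec (6 * (k + 1)) (6 * (k + 1)) M y
          = mat_vec (6 * (k + 1)) (6 * (k + 1)) (cross_star_6k k y) x))"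

definition Nmat :: "nat \<Rightarrow> mat" where
  "Nmat k = (\<lambda>a b. if a < 6 * (k + 1) \<and> a = b then real (a div 6 + 1) else 0)"

text \<open>U(M) = [M 0] + [0 N], a 6(k+1) x 6(k+2) matrix.\<close>
definition Umat :: "nat \<Rightarrow> mat \<Rightarrow> mat" where
  "Umat k M = (\<lambda>a b.
     if a < 6 * (k + 1) \<and> b < 6 * (k + 2) then
       (if b < 6 * (k + 1) then M a b else 0) + (if 6 \<le> b then Nmat k a (b - 6) else 0)
     else 0)"

definition pad_zero :: "nat \<Rightarrow> mat \<Rightarrow> mat" where
  "pad_zero k M = (\<lambda>a b. if a < 6 * (k + 1) \<and> b < 6 * (k + 1) then M a b else 0)"

definition comp_force :: "nat \<Rightarrow> vec \<Rightarrow> vec \<Rightarrow> vec" where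
  "comp_force k V h = mat_vec (6 * (k + 1)) (6 * (k + 2)) (Umat k (cross_star_6k k (trunc k V))) h"

end

theory Submission imports Defs begin
definition ee :: "nat \<Rightarrow> vec" where "ee c = (\<lambda>j. if j = c then 1 else 0)"

lemma six: "{..<6::nat} = {0,1,2,3,4,5}" by auto

lemma L0: assumes "r < 6" "s < 6"
  shows "cross6_star u r s = (\<Sum>i<6. u i * cross6_star (ee i) r s)"
proof -
  have "r \<in> {0,1,2,3,4,5}" "s \<in> {0,1,2,3,4,5}" using assms by auto
  then show ?thesis
    apply (simp only: insert_iff empty_iff simp_thms)
    apply (elim disjE; hypsubst; simp add: six cross6_star_def cross6_def skew3_def ee_def)
    done
qed

lemma delta_sum: "m \<in> {..<N} \<Longrightarrow> (\<Sum>c<N. y c * (ee c m * X)) = y m * (X::real)"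
proof -
  assume m: "m \<in> {..<N}"
  have "(\<Sum>c<N. y c * (ee c m * X)) = (\<Sum>c<N. if c = m then y c * X else 0)"
    by (rule sum.cong) (auto simp: ee_def)
  also have "\<dots> = y m * X" using m by (simp add: sum.delta)
  finally show ?thesis .
qed

lemma L2: "cross_star_6k k y a b = (\<Sum>c<6*(k+1). y c * cross_star_6k k (ee c) a b)"
proof (cases "a < 6 * (k + 1) \<and> b < 6 * (k + 1) \<and> b div 6 \<le> a div 6")
  case False
  then show ?thesis by (auto simp: cross_star_6k_def)
next
  case True
  define j where "j = a div 6 - b div 6"
  have jb: "6*j + i < 6*(k+1)" if "i < 6" for i
  proof -
    have "j \<le> k" using True unfolding j_def by auto
    then show ?thesis using that by presburger
  qed
  have r: "a mod 6 < 6" "b mod 6 < 6" by auto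
  have "cross_star_6k k y a b = cross6_star (blk y j) (a mod 6) (b mod 6)"
    using True by (simp add: cross_star_6k_def j_def)
  also have "\<dots> = (\<Sum>i<6. y (6*j+i) * cross6_star (ee i) (a mod 6) (b mod 6))"
    by (subst L0[OF r]) (simp add: blk_def)
  also have "\<dots> = (\<Sum>i<6. \<Sum>c<6*(k+1). y c * (ee c (6*j+i) * cross6_star (ee i) (a mod 6) (b mod 6)))"
  proof (rule sum.cong[OF refl])
    fix i assume "i \<in> {..<6::nat}"
    then have "6*j+i \<in> {..<6*(k+1)}" using jb by auto
    then show "y (6*j+i) * cross6_star (ee i) (a mod 6) (b mod 6) = (\<Sum>c<6*(k+1). y c * (ee c (6*j+i) * cross6_star (ee i) (a mod 6) (b mod 6)))"
      by (simp add: delta_sum)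
  qed
  also have "\<dots> = (\<Sum>c<6*(k+1). y c * (\<Sum>i<6. ee c (6*j+i) * cross6_star (ee i) (a mod 6) (b mod 6)))"
    by (subst sum.swap) (simp add: sum_distrib_left)
  also have "\<dots> = (\<Sum>c<6*(k+1). y c * cross6_star (blk (ee c) j) (a mod 6) (b mod 6))"
    by (subst L0[OF r, of "blk (ee _) j"]) (simp add: blk_def)
  also have "\<dots> = (\<Sum>c<6*(k+1). y c * cross_star_6k k (ee c) a b)"
    using True by (simp add: cross_star_6k_def j_def)
  finally show ?thesis .
qed

lemma L3: "cross_star_6k k (trunc k y) = cross_star_6k k y"
  by (intro ext, subst (1 2) L2) (simp add: trunc_def)


definition M0 :: "nat \<Rightarrow> vec \<Rightarrow> mat" where
  "M0 k x = (\<lambda>a c. if a < 6*(k+1) \<and> c < 6*(k+1)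
      then mat_vec (6*(k+1)) (6*(k+1)) (cross_star_6k k (ee c)) x a else 0)"

lemma H: "hat_cross_star_6k k x = M0 k x"
  unfolding hat_cross_star_6k_def
proof (rule the_equality)
  show "(\<forall>a b. (6 * (k + 1) \<le> a \<or> 6 * (k + 1) \<le> b) \<longrightarrow> M0 k x a b = 0) \<and>
    (\<forall>y. mat_vec (6 * (k + 1)) (6 * (k + 1)) (M0 k x) y =
         mat_vec (6 * (k + 1)) (6 * (k + 1)) (cross_star_6k k y) x)"
  proof (intro conjI allI impI)
    fix a b assume "6 * (k + 1) \<le> a \<or> 6 * (k + 1) \<le> b"
    then show "M0 k x a b = 0" by (auto simp: M0_def)
  next
    fix y
    show "mat_vec (6 * (k + 1)) (6 * (k + 1)) (M0 k x) y =
         mat_vec (6 * (k + 1)) (6 * (k + 1)) (cross_star_6k k y) x"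
    proof (rule ext)
      fix a
      show "mat_vec (6 * (k + 1)) (6 * (k + 1)) (M0 k x) y a =
         mat_vec (6 * (k + 1)) (6 * (k + 1)) (cross_star_6k k y) x a"
      proof (cases "a < 6*(k+1)")
        case True
        have "(\<Sum>c<6*(k+1). M0 k x a c * y c) = (\<Sum>c<6*(k+1). \<Sum>b<6*(k+1). y c * cross_star_6k k (ee c) a b * x b)"
          using True by (simp add: M0_def mat_vec_def sum_distrib_left sum_distrib_right mult_ac)
        also have "\<dots> = (\<Sum>b<6*(k+1). (\<Sum>c<6*(k+1). y c * cross_star_6k k (ee c) a b) * x b)"
          by (subst sum.swap) (simp add: sum_distrib_right)
        also have "\<dots> = (\<Sum>b<6*(k+1). cross_star_6k k y a b * x b)"
          by (subst L2[of k y]) simp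
        finally show ?thesis using True by (simp add: mat_vec_def)
      qed (simp add: mat_vec_def)
    qed
  qed
next
  fix M assume M: "(\<forall>a b. (6 * (k + 1) \<le> a \<or> 6 * (k + 1) \<le> b) \<longrightarrow> M a b = 0) \<and>
    (\<forall>y. mat_vec (6 * (k + 1)) (6 * (k + 1)) M y =
         mat_vec (6 * (k + 1)) (6 * (k + 1)) (cross_star_6k k y) x)"
  show "M = M0 k x"
  proof (intro ext)
    fix a c
    show "M a c = M0 k x a c"
    proof (cases "a < 6*(k+1) \<and> c < 6*(k+1)")
      case True
      have "mat_vec (6 * (k + 1)) (6 * (k + 1)) M (ee c) a = mat_vec (6 * (k + 1)) (6 * (k + 1)) (cross_star_6k k (ee c)) x a"
        using M by simp
      moreover have "(\<Sum>b<6*(k+1). M a b * ee c b) = (\<Sum>b<6*(k+1). if b = c then M a b else 0)"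
        by (rule sum.cong) (auto simp: ee_def)
      ultimately show ?thesis using True by (simp add: mat_vec_def M0_def sum.delta)
    next
      case False
      then show ?thesis using M by (auto simp: M0_def)
    qed
  qed
qed

theorem lemma5:
  fixes k :: nat
    and V h :: "real \<Rightarrow> nat \<Rightarrow> real"
    and dV dh :: "nat \<Rightarrow> real"
  assumes dV: "\<And>j. j < 6 * (k + 2) \<Longrightarrow> ((\<lambda>e. V e j) has_real_derivative dV j) (at 0)"
      and dh: "\<And>j. j < 6 * (k + 2) \<Longrightarrow> ((\<lambda>e. h e j) has_real_derivative dh j) (at 0)"
  shows "\<forall>a < 6 * (k + 1).
    ((\<lambda>e. comp_force k (V e) (h e) a) has_real_derivative
       (vec_add
          (mat_vec (6 * (k + 1)) (6 * (k + 2)) (Umat k (cross_star_6k k (trunc k (V 0)))) dh)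
          (mat_vec (6 * (k + 1)) (6 * (k + 2)) (pad_zero k (hat_cross_star_6k k (trunc k (h 0)))) dV)) a)
      (at 0)"
proof (intro allI impI)
  fix a assume a: "a < 6 * (k + 1)"
  let ?n = "6 * (k + 1)" and ?m = "6 * (k + 2)"
  let ?C = "cross_star_6k k"
  have D1: "((\<lambda>e. ?C (trunc k (V e)) a b) has_real_derivative ?C dV a b) (at 0)" for b
  proof -
    have eq: "?C (trunc k (V e)) a b = (\<Sum>c<?n. V e c * ?C (ee c) a b)" for e
      by (simp add: L3 L2[of k "V e"])
    have "((\<lambda>e. \<Sum>c<?n. V e c * ?C (ee c) a b) has_real_derivative (\<Sum>c<?n. dV c * ?C (ee c) a b)) (at 0)"
      by (intro DERIV_sum) (auto intro!: derivative_eq_intros dV)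
    then show ?thesis by (simp add: eq L2[of k dV])
  qed
  define dU where "dU b = (if b < ?n then ?C dV a b else 0)" for b
  have D2: "((\<lambda>e. Umat k (?C (trunc k (V e))) a b) has_real_derivative dU b) (at 0)" if "b < ?m" for b
    using that a D1[of b] by (cases "b < ?n") (auto simp: Umat_def dU_def intro!: derivative_eq_intros)
  have fe: "comp_force k (V e) (h e) a = (\<Sum>b<?m. Umat k (?C (trunc k (V e))) a b * h e b)" for e
    using a by (simp add: comp_force_def mat_vec_def)
  have D3: "((\<lambda>e. comp_force k (V e) (h e) a) has_real_derivative
      (\<Sum>b<?m. Umat k (?C (trunc k (V 0))) a b * dh b + dU b * h 0 b)) (at 0)"
    unfolding fe by (intro DERIV_sum DERIV_mult' D2 dh) auto
  have Y: "(\<Sum>b<?m. dU b * h 0 b) = mat_vec ?n ?m (pad_zero k (hat_cross_star_6k k (trunc k (h 0)))) dV a"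
  proof -
    have "(\<Sum>b<?m. dU b * h 0 b) = (\<Sum>b<?n. ?C dV a b * h 0 b)"
      unfolding dU_def by (rule sum.mono_neutral_cong_right) auto
    also have "\<dots> = (\<Sum>b<?n. (\<Sum>c<?n. dV c * ?C (ee c) a b) * h 0 b)"
      by (simp add: L2[of k dV])
    also have "\<dots> = (\<Sum>c<?n. \<Sum>b<?n. ?C (ee c) a b * trunc k (h 0) b * dV c)"
      by (subst sum.swap) (simp add: sum_distrib_right sum_distrib_left trunc_def mult_ac)
    also have "\<dots> = (\<Sum>c<?m. pad_zero k (hat_cross_star_6k k (trunc k (h 0))) a c * dV c)"
      by (rule sum.mono_neutral_cong_left)
         (use a in \<open>auto simp: pad_zero_def H M0_def mat_vec_def sum_distrib_right\<close>)
    finally show ?thesis using a by (simp add: mat_vec_def)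
  qed
  show "((\<lambda>e. comp_force k (V e) (h e) a) has_real_derivative
       (vec_add
          (mat_vec ?n ?m (Umat k (?C (trunc k (V 0)))) dh)
          (mat_vec ?n ?m (pad_zero k (hat_cross_star_6k k (trunc k (h 0)))) dV)) a) (at 0)"
    using D3 unfolding vec_add_def Y[symmetric] sum.distrib using a by (simp add: mat_vec_def)
qed

end
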